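(* Let $(x^*,y^* )$ be an optimal solution of the LP relaxation of an FTFP instance $\mathcal I$ which is complete (i.e. $x^*_{ij}\in\{0,y^*_i\}$ for all $i,j$) and satisfies $\sum_{i\in F}x^*_{ij}=r_j$ for all $j\in C$. Fix $\bar r$ with $1\le \bar r\le \min_{j\in C} r_j$. Define for all $i\in F$, $j\in C$: $$\hat y_i=\max\{\lfloor y^*_i-\bar r\rfloor,0\},\quad \hat x_{ij}=\max\{\lfloor x^*_{ij}-\bar r\rfloor,0\},\quad \dot y_i=y^*_i-\hat y_i,\quad \dot x_{ij}=x^*_{ij}-\hat x_{ij}.$$ Let $\hat{\mathcal I}$ (resp. $\dot{\mathcal I}$) be the FTFP instance with the same facilities, clients, opening costs and connection costs as $\mathcal I$, but with requirements $\hat r_j=\sum_{i\in F}\hat x_{ij}$ (resp. $\dot r_j=\sum_{i\in F}\dot x_{ij}$). Then: (i) $(\hat x,\hat y)$ is a feasible integral solution of $\hat{\mathcal I}$; (ii) $(\dot x,\dot y)$ is a feasible fractional solution of the LP relaxation of $\dot{\mathcal I}$; (iii) $(\hat x,\hat y)$ and $(\dot x,\dot y)$ are optimal solutions of the LP relaxations of $\hat{\mathcal I}$ and $\dot{\mathcal I}$, respectively; (iv) for every $j\in C$, $\bar r\le \dot r_j\le (\bar r+1)\,|F|$.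
   Context: Metric Fault-Tolerant Facility Placement (FTFP): a finite set $F$ of facilities with opening costs $f_i\ge 0$, a finite set $C$ of clients with requirements $r_j$, and metric connection costs $c_{ij}$; each facility may be opened any number of times (cost $f_i$ per copy) and each client $j$ must be connected to $r_j$ open copies. Its LP relaxation is: minimize $\sum_{i,j}c_{ij}x_{ij}+\sum_i f_iy_i$ subject to $\sum_{i\in F}x_{ij}\ge r_j$ for all $j$, $y_i-x_{ij}\ge 0$ for all $i,j$, $x,y\ge 0$. A feasible integral solution is a feasible LP solution with integer entries. *)

theory Defs
  imports Complex_Main
begin

text \<open>An FTFP instance: finite facility set F, finite client set C, opening costs fc,
  connection costs cc, requirements r (real-valued here; for genuine instances they
  are nonnegative integers).\<close>

definition ftfp_metric :: "'f set \<Rightarrow> 'c set \<Rightarrow> ('f \<Rightarrow> 'c \<Rightarrow> real) \<Rightarrow> bool" where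
  "ftfp_metric F C cc \<longleftrightarrow>
     (\<forall>i\<in>F. \<forall>j\<in>C. cc i j \<ge> 0) \<and>
     (\<forall>i\<in>F. \<forall>i'\<in>F. \<forall>j\<in>C. \<forall>j'\<in>C. cc i j \<le> cc i j' + cc i' j' + cc i' j)"

definition ftfp_lp_feasible ::
  "'f set \<Rightarrow> 'c set \<Rightarrow> ('c \<Rightarrow> real) \<Rightarrow> ('f \<Rightarrow> 'c \<Rightarrow> real) \<Rightarrow> ('f \<Rightarrow> real) \<Rightarrow> bool" where
  "ftfp_lp_feasible F C r x y \<longleftrightarrow>
     (\<forall>j\<in>C. (\<Sum>i\<in>F. x i j) \<ge> r j) \<and>
     (\<forall>i\<in>F. \<forall>j\<in>C. y i - x i j \<ge> 0) \<and>
     (\<forall>i\<in>F. \<forall>j\<in>C. x i j \<ge> 0) \<and> (\<forall>i\<in>F. y i \<ge> 0)"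

definition ftfp_cost ::
  "'f set \<Rightarrow> 'c set \<Rightarrow> ('f \<Rightarrow> real) \<Rightarrow> ('f \<Rightarrow> 'c \<Rightarrow> real) \<Rightarrow> ('f \<Rightarrow> 'c \<Rightarrow> real) \<Rightarrow> ('f \<Rightarrow> real) \<Rightarrow> real" where
  "ftfp_cost F C fc cc x y = (\<Sum>i\<in>F. \<Sum>j\<in>C. cc i j * x i j) + (\<Sum>i\<in>F. fc i * y i)"

definition ftfp_lp_optimal ::
  "'f set \<Rightarrow> 'c set \<Rightarrow> ('f \<Rightarrow> real) \<Rightarrow> ('f \<Rightarrow> 'c \<Rightarrow> real) \<Rightarrow> ('c \<Rightarrow> real)
     \<Rightarrow> ('f \<Rightarrow> 'c \<Rightarrow> real) \<Rightarrow> ('f \<Rightarrow> real) \<Rightarrow> bool" where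
  "ftfp_lp_optimal F C fc cc r x y \<longleftrightarrow>
     ftfp_lp_feasible F C r x y \<and>
     (\<forall>x' y'. ftfp_lp_feasible F C r x' y' \<longrightarrow> ftfp_cost F C fc cc x y \<le> ftfp_cost F C fc cc x' y')"

definition ftfp_integral :: "'f set \<Rightarrow> 'c set \<Rightarrow> ('f \<Rightarrow> 'c \<Rightarrow> real) \<Rightarrow> ('f \<Rightarrow> real) \<Rightarrow> bool" where
  "ftfp_integral F C x y \<longleftrightarrow> (\<forall>i\<in>F. \<forall>j\<in>C. x i j \<in> \<int>) \<and> (\<forall>i\<in>F. y i \<in> \<int>)"

definition ftfp_complete :: "'f set \<Rightarrow> 'c set \<Rightarrow> ('f \<Rightarrow> 'c \<Rightarrow> real) \<Rightarrow> ('f \<Rightarrow> real) \<Rightarrow> bool" where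
  "ftfp_complete F C x y \<longleftrightarrow> (\<forall>i\<in>F. \<forall>j\<in>C. x i j = 0 \<or> x i j = y i)"

end

theory Submission
  imports Defs
begin

lemma cost_add:
  "ftfp_cost F C fc cc (\<lambda>i j. a i j + b i j) (\<lambda>i. p i + q i)
   = ftfp_cost F C fc cc a p + ftfp_cost F C fc cc b q"
  unfolding ftfp_cost_def by (simp add: distrib_left sum.distrib)

lemma split_opt:
  assumes opt: "ftfp_lp_optimal F C fc cc r xs ys"
    and rs: "\<forall>j\<in>C. r j = ra j + rb j"
    and xs: "\<forall>i j. xs i j = xa i j + xb i j"
    and ys: "\<forall>i. ys i = ya i + yb i"
    and fa: "ftfp_lp_feasible F C ra xa ya"
    and fb: "ftfp_lp_feasible F C rb xb yb"
  shows "ftfp_lp_optimal F C fc cc ra xa ya"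
  unfolding ftfp_lp_optimal_def
proof (intro conjI allI impI)
  show "ftfp_lp_feasible F C ra xa ya" by fact
  fix x' y' assume f': "ftfp_lp_feasible F C ra x' y'"
  have feas: "ftfp_lp_feasible F C r (\<lambda>i j. x' i j + xb i j) (\<lambda>i. y' i + yb i)"
    using f' fb rs unfolding ftfp_lp_feasible_def
    by (auto simp: sum.distrib intro: add_mono)
  have xs': "xs = (\<lambda>i j. xa i j + xb i j)" "ys = (\<lambda>i. ya i + yb i)" using xs ys by auto
  have "ftfp_cost F C fc cc xs ys \<le> ftfp_cost F C fc cc (\<lambda>i j. x' i j + xb i j) (\<lambda>i. y' i + yb i)"
    using opt feas unfolding ftfp_lp_optimal_def by blast
  thus "ftfp_cost F C fc cc xa ya \<le> ftfp_cost F C fc cc x' y'"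
    unfolding xs' cost_add by simp
qed

lemma hfacts:
  fixes t rbar :: real
  assumes "t \<ge> 0" "rbar \<ge> 1"
  defines "h \<equiv> max (real_of_int \<lfloor>t - rbar\<rfloor>) 0"
  shows "0 \<le> h" "h \<le> t" "t - h \<le> rbar + 1" "t \<ge> rbar \<Longrightarrow> t - h \<ge> rbar"
    "t < rbar \<Longrightarrow> h = 0"
proof -
  have a: "real_of_int \<lfloor>t - rbar\<rfloor> \<le> t - rbar" by linarith
  have b: "t - rbar < real_of_int \<lfloor>t - rbar\<rfloor> + 1" by linarith
  show "0 \<le> h" "h \<le> t" "t - h \<le> rbar + 1" "t \<ge> rbar \<Longrightarrow> t - h \<ge> rbar"
    "t < rbar \<Longrightarrow> h = 0" using a b assms(1,2) unfolding h_def
    by (cases "real_of_int \<lfloor>t - rbar\<rfloor> \<le> 0"; simp only: max_def if_True if_False; linarith)+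
qed

lemma hmono:
  fixes s t rbar :: real
  assumes "s \<le> t"
  shows "max (real_of_int \<lfloor>s - rbar\<rfloor>) 0 \<le> max (real_of_int \<lfloor>t - rbar\<rfloor>) 0"
proof -
  have "\<lfloor>s - rbar\<rfloor> \<le> \<lfloor>t - rbar\<rfloor>" using assms by (intro floor_mono) simp
  thus ?thesis by linarith
qed

theorem lemma6:
  fixes F :: "'f set" and C :: "'c set"
    and fc :: "'f \<Rightarrow> real" and cc :: "'f \<Rightarrow> 'c \<Rightarrow> real" and r :: "'c \<Rightarrow> nat"
    and xs :: "'f \<Rightarrow> 'c \<Rightarrow> real" and ys :: "'f \<Rightarrow> real" and rbar :: real
    and xh xd :: "'f \<Rightarrow> 'c \<Rightarrow> real" and yh yd :: "'f \<Rightarrow> real" and rh rd :: "'c \<Rightarrow> real"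
  assumes finF: "finite F" and finC: "finite C"
    and fc_nonneg: "\<forall>i\<in>F. fc i \<ge> 0"
    and metric: "ftfp_metric F C cc"
    and opt: "ftfp_lp_optimal F C fc cc (\<lambda>j. real (r j)) xs ys"
    and complete: "ftfp_complete F C xs ys"
    and tight: "\<forall>j\<in>C. (\<Sum>i\<in>F. xs i j) = real (r j)"
    and rbar_ge: "1 \<le> rbar" and rbar_le: "\<forall>j\<in>C. rbar \<le> real (r j)"
    and yh_def: "\<forall>i. yh i = max (real_of_int \<lfloor>ys i - rbar\<rfloor>) 0"
    and xh_def: "\<forall>i j. xh i j = max (real_of_int \<lfloor>xs i j - rbar\<rfloor>) 0"
    and yd_def: "\<forall>i. yd i = ys i - yh i"
    and xd_def: "\<forall>i j. xd i j = xs i j - xh i j"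
    and rh_def: "\<forall>j. rh j = (\<Sum>i\<in>F. xh i j)"
    and rd_def: "\<forall>j. rd j = (\<Sum>i\<in>F. xd i j)"
  shows "(ftfp_lp_feasible F C rh xh yh \<and> ftfp_integral F C xh yh)
       \<and> ftfp_lp_feasible F C rd xd yd
       \<and> ftfp_lp_optimal F C fc cc rh xh yh \<and> ftfp_lp_optimal F C fc cc rd xd yd
       \<and> (\<forall>j\<in>C. rbar \<le> rd j \<and> rd j \<le> (rbar + 1) * real (card F))"
proof -
  have feas: "ftfp_lp_feasible F C (\<lambda>j. real (r j)) xs ys" using opt unfolding ftfp_lp_optimal_def by blast
  have xs0: "\<forall>i\<in>F. \<forall>j\<in>C. xs i j \<ge> 0" and ys0: "\<forall>i\<in>F. ys i \<ge> 0"
    and yx: "\<forall>i\<in>F. \<forall>j\<in>C. ys i - xs i j \<ge> 0"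
    using feas unfolding ftfp_lp_feasible_def by auto
  note H = hfacts[OF _ rbar_ge]
  have xh0: "\<And>i j. i\<in>F \<Longrightarrow> j\<in>C \<Longrightarrow> 0 \<le> xh i j \<and> xh i j \<le> xs i j \<and> xd i j \<le> rbar + 1
      \<and> (xs i j \<ge> rbar \<longrightarrow> xd i j \<ge> rbar) \<and> (xs i j < rbar \<longrightarrow> xd i j = xs i j) \<and> xd i j \<ge> 0"
    using H[of "xs i j" for i j] xs0 xh_def xd_def by auto
  have yh0: "\<And>i. i\<in>F \<Longrightarrow> 0 \<le> yh i \<and> yh i \<le> ys i"
    using H[of "ys i" for i] ys0 yh_def by auto
  have yxh: "\<And>i j. i\<in>F \<Longrightarrow> j\<in>C \<Longrightarrow> xh i j \<le> yh i"
    using hmono[of "xs i j" "ys i" rbar for i j] yx xh_def yh_def by auto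
  have yxd: "\<And>i j. i\<in>F \<Longrightarrow> j\<in>C \<Longrightarrow> xd i j \<le> yd i"
  proof -
    fix i j assume ij: "i\<in>F" "j\<in>C"
    show "xd i j \<le> yd i"
    proof (cases "xs i j = 0")
      case True
      then have "xh i j = 0" using xh_def rbar_ge by simp
      then show ?thesis using True xd_def yd_def yh0[OF ij(1)] by simp
    next
      case False
      then have "xs i j = ys i" using complete ij unfolding ftfp_complete_def by auto
      then show ?thesis using xd_def yd_def xh_def yh_def by simp
    qed
  qed
  have fh: "ftfp_lp_feasible F C rh xh yh"
    unfolding ftfp_lp_feasible_def using rh_def xh0 yh0 yxh by auto
  have fd: "ftfp_lp_feasible F C rd xd yd"
    unfolding ftfp_lp_feasible_def using rd_def xh0 yh0 yxd yd_def by auto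
  have ih: "ftfp_integral F C xh yh"
    unfolding ftfp_integral_def using xh_def yh_def by (auto simp: max_def)
  have rs: "\<forall>j\<in>C. real (r j) = rh j + rd j"
  proof
    fix j assume j: "j\<in>C"
    have "rh j + rd j = (\<Sum>i\<in>F. xh i j + xd i j)" using rh_def rd_def by (simp add: sum.distrib)
    also have "\<dots> = (\<Sum>i\<in>F. xs i j)" using xd_def by simp
    finally show "real (r j) = rh j + rd j" using tight j by simp
  qed
  have xs: "\<forall>i j. xs i j = xh i j + xd i j" using xd_def by simp
  have ys: "\<forall>i. ys i = yh i + yd i" using yd_def by simp
  have oh: "ftfp_lp_optimal F C fc cc rh xh yh"
    by (rule split_opt[OF opt rs xs ys fh fd])
  have od: "ftfp_lp_optimal F C fc cc rd xd yd"
    by (rule split_opt[OF opt _ _ _ fd fh]) (use rs xs ys in auto)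
  have bnd: "\<forall>j\<in>C. rbar \<le> rd j \<and> rd j \<le> (rbar + 1) * real (card F)"
  proof
    fix j assume j: "j\<in>C"
    have up: "rd j \<le> (rbar + 1) * real (card F)"
      using rd_def sum_mono[of F "\<lambda>i. xd i j" "\<lambda>i. rbar + 1"] xh0 j by (simp add: mult.commute)
    have lo: "rbar \<le> rd j"
    proof (cases "\<exists>i\<in>F. xs i j \<ge> rbar")
      case True
      then obtain i where i: "i\<in>F" "xs i j \<ge> rbar" by blast
      have "xd i j \<le> (\<Sum>i\<in>F. xd i j)"
        by (rule member_le_sum) (use i finF xh0 j in auto)
      then show ?thesis using xh0[OF i(1) j] i rd_def by auto
    next
      case False
      then have "(\<Sum>i\<in>F. xd i j) = (\<Sum>i\<in>F. xs i j)" using xh0 j by (intro sum.cong) auto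
      then show ?thesis using rd_def tight rbar_le j by auto
    qed
    show "rbar \<le> rd j \<and> rd j \<le> (rbar + 1) * real (card F)" using up lo by simp
  qed
  show ?thesis using fh ih fd oh od bnd by blast
qed

end
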